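(* Consider the finite-sum problem $\min_{\theta\in\mathbb{R}^n}\Psi(\theta)=\frac1N\sum_{i=1}^N\psi_i(\theta)$ and the following stochastic method (S2QN). Fix constants $0<r_1<r_2$, a positive sequence $\{\alpha_k\}$, and step sizes $\{\beta_k\}$. At iteration $k$, random index sets $\mathcal S_g^k\subseteq\{1,\dots,N\}$ are chosen, $g_k=\nabla_{\mathcal S_g^k}\Psi(\theta_k):=\frac{1}{|\mathcal S_g^k|}\sum_{i\in\mathcal S_g^k}\nabla\psi_i(\theta_k)$, a symmetric matrix $B_k=H_k+\Lambda_k$ is formed, the regularization parameter is $$\lambda_k=\begin{cases}\frac{2r_1}{\|g_{k-1}\|+r_1}\alpha_k^{-1}, & \|g_{k-1}\|<r_1,\\ \frac{2\|g_{k-1}\|}{\|g_{k-1}\|+r_2}\alpha_k^{-1}, & \|g_{k-1}\|>r_2,\\ \alpha_k^{-1}, &\text{otherwise},\end{cases}$$ and $\theta_{k+1}=\theta_k+\beta_k d_k$ with $d_k=-(B_k+\lambda_kI)^{-1}g_k$. Let $\{\mathcal F_k\}$ be a filtration with $\theta_k$ being $\mathcal F_{k-1}$-measurable. Assume: (i) $\Psi$ is continuously differentiable on $\mathbb{R}^n$, bounded below by $\Psi_{\inf}$, and $\nabla\Psi$ is Lipschitz continuous on $\mathbb{R}^n$ with constant $L_\Psi\ge 1$; (ii) for every $k$, $B_k$ and $\nabla_{\mathcal S_g^k}\Psi(\theta_k)$ are conditionally independent given $\mathcal F_{k-1}$, and almost surely $\mathbb{E}[\nabla_{\mathcal S_g^k}\Psi(\theta_k)\mid\mathcal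 F_{k-1}]=\nabla\Psi(\theta_k)$; (iii) almost surely $\mathbb{E}[\|\nabla_{\mathcal S_g^k}\Psi(\theta_k)-\nabla\Psi(\theta_k)\|^2\mid\mathcal F_{k-1}]\le\sigma_k^2$; (iv) there is $h>0$ with $0\preceq B_k\preceq hI$ for all $k$; (v) (Polyak–Łojasiewicz condition) there is $c\in(0,\infty)$ such that $2c(\Psi(\theta)-\Psi_{\inf})\le\|\nabla\Psi(\theta)\|^2$ for all $\theta\in\mathbb{R}^n$. Suppose $\beta_k\equiv1$, $\alpha_k\equiv\alpha<\min\{\frac{r_1}{4r_2(L_\Psi+h)},\frac8c\}$, and $\sigma_k^2\le M_\sigma\zeta^k$ for some scalar $M_\sigma$ and some $\zeta\in(0,1)$. Then $$\mathbb{E}[\Psi(\theta_k)]-\Psi_{\inf}\le\mu\nu^{k-1}\quad\text{for all }k,$$ where $\nu=\max\{\zeta,1-\frac{1}{16}c\alpha\}$ and $\mu=\max\{\Psi(\theta_1)-\Psi_{\inf},\frac{15M_\sigma}{c}\}$.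
   Context: $\psi_i:\mathbb{R}^n\to\mathbb{R}$ are component functions. The base matrix $H_k$ represents partial Hessian information and $\Lambda_k$ is a quasi-Newton refinement matrix; the theorem only uses the properties (ii) and (iv) of $B_k=H_k+\Lambda_k$. $g_{k-1}$ denotes the stochastic gradient used at the previous iteration. *)

theory Defs
  imports "HOL-Analysis.Analysis" "HOL-Probability.Probability"
begin

text \<open>Regularization parameter of S2QN: lambda_k as a function of x = norm g_(k-1).\<close>
definition s2qn_lambda :: "real \<Rightarrow> real \<Rightarrow> real \<Rightarrow> real \<Rightarrow> real" where
  "s2qn_lambda r1 r2 \<alpha> x =
     (if x < r1 then (2 * r1 / (x + r1)) / \<alpha>
      else if x > r2 then (2 * x / (x + r2)) / \<alpha>
      else 1 / \<alpha>)"

definition cond_indep ::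
  "'a measure \<Rightarrow> 'a measure \<Rightarrow> ('a \<Rightarrow> 'b::topological_space) \<Rightarrow> ('a \<Rightarrow> 'c::topological_space) \<Rightarrow> bool" where
  "cond_indep M G X Y \<longleftrightarrow>
     (\<forall>A \<in> sets borel. \<forall>C \<in> sets borel.
        AE \<omega> in M.
          nn_cond_exp M G (indicator {x \<in> space M. X x \<in> A \<and> Y x \<in> C}) \<omega> =
          nn_cond_exp M G (indicator {x \<in> space M. X x \<in> A}) \<omega> *
          nn_cond_exp M G (indicator {x \<in> space M. Y x \<in> C}) \<omega>)"

definition psd_between :: "real \<Rightarrow> real^'n^'n \<Rightarrow> bool" where
  "psd_between h B \<longleftrightarrow> (\<forall>v. 0 \<le> v \<bullet> (B *v v) \<and> v \<bullet> (B *v v) \<le> h * (v \<bullet> v))"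

end

theory Submission imports Defs begin

lemma sym_dot:
  fixes A :: "real^'n^'n"
  assumes "transpose A = A"
  shows "(A *v x) \<bullet> y = x \<bullet> (A *v y)"
  by (metis assms dot_lmul_matrix vector_transpose_matrix)

lemma psd_norm:
  fixes B :: "real^'n^'n"
  assumes sym: "transpose B = B" and psd: "psd_between h B" and h: "h > 0"
  shows "(norm (B *v v))^2 \<le> h * (v \<bullet> (B *v v))"
proof -
  define u where "u = B *v v"
  define t where "t = 1 / h"
  have p1: "0 \<le> (v - t *\<^sub>R u) \<bullet> (B *v (v - t *\<^sub>R u))"
    using psd unfolding psd_between_def by blast
  have p2: "u \<bullet> (B *v u) \<le> h * (u \<bullet> u)"
    using psd unfolding psd_between_def by blast
  have e1: "B *v (v - t *\<^sub>R u) = u - t *\<^sub>R (B *v u)"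
    by (simp add: u_def matrix_vector_mult_diff_distrib matrix_vector_mult_scaleR)
  have e2: "v \<bullet> (B *v u) = u \<bullet> u"
    using sym_dot[OF sym, of v u] by (simp add: u_def inner_commute)
  have e3: "u \<bullet> v = v \<bullet> (B *v v)" by (simp add: u_def inner_commute)
  have ex: "(v - t *\<^sub>R u) \<bullet> (B *v (v - t *\<^sub>R u)) = v \<bullet> (B *v v) - 2 * t * (u \<bullet> u) + t * t * (u \<bullet> (B *v u))"
    unfolding e1 using e2 e3 by (simp add: u_def inner_diff_left inner_diff_right algebra_simps)
  have dummy: True
    by (simp add: inner_diff_left inner_diff_right algebra_simps)
  with p1 ex have "0 \<le> v \<bullet> (B *v v) - 2 * t * (u \<bullet> u) + t * t * (u \<bullet> (B *v u))" by simp
  moreover have "t * t * (u \<bullet> (B *v u)) \<le> t * t * (h * (u \<bullet> u))"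
    using p2 by (simp add: mult_left_mono)
  moreover have "t * t * (h * (u \<bullet> u)) = t * (u \<bullet> u)" using h by (simp add: t_def field_simps)
  ultimately have "0 \<le> v \<bullet> (B *v v) - t * (u \<bullet> u)" by linarith
  hence "t * (u \<bullet> u) \<le> v \<bullet> (B *v v)" by simp
  hence "h * (t * (u \<bullet> u)) \<le> h * (v \<bullet> (B *v v))" using h by (simp add: mult_left_mono)
  moreover have "h * (t * (u \<bullet> u)) = (norm u)^2" using h by (simp add: t_def power2_norm_eq_inner)
  ultimately show ?thesis by (simp add: u_def)
qed

lemma Cmat:
  fixes B :: "real^'n^'n"
  assumes sym: "transpose B = B" and psd: "psd_between h B" and h: "h > 0" and lam: "lam > 0"
  shows "(B + lam *\<^sub>R mat 1) *v w = B *v w + lam *\<^sub>R w"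
    and "w \<bullet> ((B + lam *\<^sub>R mat 1) *v w) \<ge> lam * (norm w)^2"
    and "(norm ((B + lam *\<^sub>R mat 1) *v w))^2 \<le> (h + lam) * (w \<bullet> ((B + lam *\<^sub>R mat 1) *v w))"
proof -
  show eq: "(B + lam *\<^sub>R mat 1) *v w = B *v w + lam *\<^sub>R w"
    by (simp add: matrix_vector_mult_add_rdistrib scaleR_matrix_vector_assoc[symmetric])
  have q: "0 \<le> w \<bullet> (B *v w)" "w \<bullet> (B *v w) \<le> h * (w \<bullet> w)"
    using psd unfolding psd_between_def by auto
  show "w \<bullet> ((B + lam *\<^sub>R mat 1) *v w) \<ge> lam * (norm w)^2"
    unfolding eq using q by (simp add: inner_add_right power2_norm_eq_inner)
  have n: "(norm (B *v w))^2 \<le> h * (w \<bullet> (B *v w))" by (rule psd_norm[OF sym psd h])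
  have "(norm (B *v w + lam *\<^sub>R w))^2 = (norm (B *v w))^2 + 2 * lam * (w \<bullet> (B *v w)) + lam^2 * (w \<bullet> w)"
    by (simp only: power2_norm_eq_inner) (simp add: inner_add_left inner_add_right inner_commute algebra_simps power2_eq_square)
  also have "\<dots> \<le> (h + lam) * (w \<bullet> (B *v w + lam *\<^sub>R w))"
  proof -
    have "lam * (w \<bullet> (B *v w)) \<le> lam * (h * (w \<bullet> w))" using q lam by (simp add: mult_left_mono)
    thus ?thesis using n by (simp add: inner_add_right algebra_simps power2_eq_square)
  qed
  finally show "(norm ((B + lam *\<^sub>R mat 1) *v w))^2 \<le> (h + lam) * (w \<bullet> ((B + lam *\<^sub>R mat 1) *v w))"
    unfolding eq .
qed

lemma Cinv:
  fixes C :: "real^'n^'n"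
  assumes "\<And>w. w \<bullet> (C *v w) \<ge> lam * (norm w)^2" "lam > 0"
  shows "C *v (matrix_inv C *v y) = y"
proof -
  have "\<forall>x. C *v x = 0 \<longrightarrow> x = 0"
  proof (intro allI impI)
    fix x assume "C *v x = 0"
    hence "lam * (norm x)^2 \<le> 0" using assms(1)[of x] by simp
    thus "x = 0" using assms(2) by (simp add: mult_le_0_iff)
  qed
  hence "invertible C" by (simp add: invertible_left_inverse matrix_left_invertible_ker)
  hence "C ** matrix_inv C = mat 1 \<and> matrix_inv C ** C = mat 1"
    unfolding invertible_def matrix_inv_def by (rule someI_ex)
  thus ?thesis by (simp add: matrix_vector_mul_assoc)
qed

lemma lam_bounds:
  assumes "0 < r1" "r1 < r2" "0 < a" "0 \<le> x"
  shows "1 / a \<le> s2qn_lambda r1 r2 a x" "s2qn_lambda r1 r2 a x \<le> 2 / a"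
proof -
  have A: "1 \<le> 2 * r1 / (x + r1) \<and> 2 * r1 / (x + r1) \<le> 2" if "x < r1"
    using assms that by (auto simp: field_simps)
  have B: "1 \<le> 2 * x / (x + r2) \<and> 2 * x / (x + r2) \<le> 2" if "x > r2"
    using assms that by (auto simp: field_simps)
  have D: "1 / a \<le> y / a \<and> y / a \<le> 2 / a" if "1 \<le> y" "y \<le> 2" for y
    using assms that by (auto simp: divide_right_mono)
  show "1 / a \<le> s2qn_lambda r1 r2 a x" "s2qn_lambda r1 r2 a x \<le> 2 / a"
    unfolding s2qn_lambda_def using A B D[of 1] D[of "2 * r1 / (x + r1)"] D[of "2 * x / (x + r2)"]
    by auto
qed

lemma descent:
  fixes f :: "'v::real_inner \<Rightarrow> real"
  assumes der: "\<And>x. (f has_derivative (\<lambda>v. G x \<bullet> v)) (at x)"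
    and lip: "\<And>x y. norm (G x - G y) \<le> L * norm (x - y)" and L: "L \<ge> 0"
  shows "f (x + d) \<le> f x + G x \<bullet> d + L / 2 * (norm d)^2"
proof -
  define \<phi> where "\<phi> t = f (x + t *\<^sub>R d) - t * (G x \<bullet> d) - L / 2 * t^2 * (norm d)^2" for t
  have h1: "((\<lambda>t. f (x + t *\<^sub>R d)) has_real_derivative (G (x + t *\<^sub>R d) \<bullet> d)) (at t)" for t
  proof -
    have "((\<lambda>t. x + t *\<^sub>R d) has_derivative (\<lambda>s. s *\<^sub>R d)) (at t)"
      by (auto intro!: derivative_eq_intros)
    from has_derivative_compose[OF this der]
    have "((\<lambda>t. f (x + t *\<^sub>R d)) has_derivative (\<lambda>s. G (x + t *\<^sub>R d) \<bullet> (s *\<^sub>R d))) (at t)" .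
    moreover have "(\<lambda>s. G (x + t *\<^sub>R d) \<bullet> (s *\<^sub>R d)) = (*) (G (x + t *\<^sub>R d) \<bullet> d)"
      by (rule ext) (simp add: mult.commute)
    ultimately show ?thesis unfolding has_field_derivative_def by simp
  qed
  have d\<phi>: "(\<phi> has_real_derivative (G (x + t *\<^sub>R d) \<bullet> d - G x \<bullet> d - L * t * (norm d)^2)) (at t)" for t
    unfolding \<phi>_def
    by (rule derivative_eq_intros h1 refl | simp)+
  obtain z where z: "0 < z" "z < 1" "\<phi> 1 - \<phi> 0 = (1 - 0) * (G (x + z *\<^sub>R d) \<bullet> d - G x \<bullet> d - L * z * (norm d)^2)"
    using MVT2[of 0 1 \<phi> "\<lambda>t. G (x + t *\<^sub>R d) \<bullet> d - G x \<bullet> d - L * t * (norm d)^2"] d\<phi> by auto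
  have "G (x + z *\<^sub>R d) \<bullet> d - G x \<bullet> d = (G (x + z *\<^sub>R d) - G x) \<bullet> d" by (simp add: inner_diff_left)
  also have "\<dots> \<le> norm (G (x + z *\<^sub>R d) - G x) * norm d" by (rule norm_cauchy_schwarz)
  also have "\<dots> \<le> (L * norm (z *\<^sub>R d)) * norm d"
    using lip[of "x + z *\<^sub>R d" x] by (simp add: mult_right_mono)
  also have "\<dots> = L * z * (norm d)^2" using z by (simp add: power2_eq_square)
  finally have "\<phi> 1 \<le> \<phi> 0" using z by simp
  thus ?thesis unfolding \<phi>_def by simp
qed

lemma step_ineq:
  fixes f :: "real^'n \<Rightarrow> real" and Bm :: "real^'n^'n"
  assumes der: "\<And>x. (f has_derivative (\<lambda>v. G x \<bullet> v)) (at x)"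
    and lip: "\<And>x y. norm (G x - G y) \<le> L * norm (x - y)" and L: "L \<ge> 0"
    and a: "a > 0" and h: "h > 0" and c: "c > 0"
    and aL: "a * L \<le> 1/4" and ah: "a * h \<le> 1/4"
    and sym: "transpose Bm = Bm" and psd: "psd_between h Bm"
    and lam1: "1 / a \<le> lam" and lam2: "lam \<le> 2 / a"
    and PL: "\<And>x. 2 * c * (f x - finf) \<le> (norm (G x))^2"
  shows "f (x + 1 *\<^sub>R (- (matrix_inv (Bm + lam *\<^sub>R mat 1) *v gk))) - finf
     \<le> (1 - c * a / 6) * (f x - finf) + 7 * a / 8 * (norm (gk - G x))^2"
proof -
  define C where "C = Bm + lam *\<^sub>R mat 1"
  define w where "w = matrix_inv C *v gk"
  define e where "e = gk - G x"
  have lam: "lam > 0" using lam1 a by (smt (verit) divide_pos_pos)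
  have Cpos: "\<And>v. v \<bullet> (C *v v) \<ge> lam * (norm v)^2" unfolding C_def using Cmat(2)[OF sym psd h lam] by blast
  have Cw: "C *v w = gk" unfolding w_def by (rule Cinv[OF Cpos lam])
  define X where "X = w \<bullet> gk"
  define W where "W = (norm w)^2"
  define E where "E = (norm e)^2"
  have XW: "X \<ge> lam * W" using Cpos[of w] Cw by (simp add: X_def W_def)
  have W0: "W \<ge> 0" by (simp add: W_def)
  have X0: "X \<ge> 0" using XW W0 lam by (smt (verit) mult_nonneg_nonneg)
  have gg: "(norm gk)^2 \<le> (h + lam) * X" using Cmat(3)[OF sym psd h lam, of w] Cw by (simp add: C_def X_def)
  have desc: "f (x + (- w)) \<le> f x + G x \<bullet> (- w) + L / 2 * (norm (- w))^2"
    by (rule descent[OF der lip L])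
  have Gw: "G x \<bullet> w = X - e \<bullet> w" by (simp add: X_def e_def inner_diff_left inner_commute[of w gk])
  have ew: "e \<bullet> w \<le> lam / 2 * W + E / (2 * lam)"
  proof -
    have "e \<bullet> w \<le> norm e * norm w" by (rule norm_cauchy_schwarz)
    moreover have "0 \<le> (lam * norm w - norm e)^2" by simp
    hence "2 * lam * (norm e * norm w) \<le> lam^2 * W + E"
      by (simp add: W_def E_def power2_eq_square algebra_simps)
    hence "norm e * norm w \<le> lam / 2 * W + E / (2 * lam)" using lam
      by (simp add: field_simps power2_eq_square)
    ultimately show ?thesis by linarith
  qed
  have ia: "1 / lam \<le> a" using lam1 lam a by (simp add: field_simps)
  have f1: "e \<bullet> w \<le> X / 2 + a * E / 2"
  proof -
    have "E / (2 * lam) = (1 / lam) * E / 2" by simp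
    also have "\<dots> \<le> a * E / 2"
    proof -
      have "(1 / lam) * E \<le> a * E" using ia mult_right_mono[OF ia, of E] by (simp add: E_def)
      thus ?thesis by (simp only: divide_right_mono)
    qed
    finally show ?thesis using ew XW by linarith
  qed
  have f2: "L / 2 * W \<le> X / 8"
  proof -
    have "W \<le> (1 / lam) * X" using XW lam by (simp add: field_simps)
    also have "\<dots> \<le> a * X" by (rule mult_right_mono[OF ia X0])
    finally have "L * W \<le> L * (a * X)" using L by (simp add: mult_left_mono)
    also have "\<dots> = (a * L) * X" by simp
    also have "\<dots> \<le> 1/4 * X" by (rule mult_right_mono[OF aL X0])
    finally show ?thesis by simp
  qed
  have Delta: "f (x - w) - f x \<le> - 3 / 8 * X + a * E / 2"
    using desc Gw f1 f2 by (simp add: W_def)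
  have f3: "(norm (G x))^2 \<le> 2 * (h + lam) * X + 2 * E"
  proof -
    have "norm (G x) \<le> norm gk + norm e" using norm_triangle_ineq4[of gk e] by (simp add: e_def)
    hence "(norm (G x))^2 \<le> (norm gk + norm e)^2" by (simp add: power_mono)
    also have "\<dots> \<le> 2 * (norm gk)^2 + 2 * (norm e)^2"
      using sum_squares_ge_zero by (smt (verit) power2_sum zero_le_power2 power2_diff)
    finally show ?thesis using gg by (simp add: E_def algebra_simps)
  qed
  have f4: "a * (h + lam) \<le> 9 / 4"
  proof -
    have "a * lam \<le> 2" using lam2 a by (simp add: field_simps)
    thus ?thesis using ah by (simp add: algebra_simps)
  qed
  have f5: "a * (norm (G x))^2 \<le> 9 / 2 * X + 2 * a * E"
  proof -
    have "a * (norm (G x))^2 \<le> a * (2 * (h + lam) * X + 2 * E)" using f3 a by (simp add: mult_left_mono)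
    also have "\<dots> = 2 * (a * (h + lam)) * X + 2 * a * E" by (simp add: algebra_simps)
    also have "\<dots> \<le> 2 * (9/4) * X + 2 * a * E"
    proof -
      have "(a * (h + lam)) * X \<le> (9/4) * X" by (rule mult_right_mono[OF f4 X0])
      thus ?thesis by linarith
    qed
    finally show ?thesis by simp
  qed
  have f6: "a * (2 * c * (f x - finf)) \<le> a * (norm (G x))^2" using PL[of x] a by (simp add: mult_left_mono)
  have "f (x - w) - finf \<le> (f x - finf) - 3 / 8 * X + a * E / 2" using Delta by simp
  also have "\<dots> \<le> (1 - c * a / 6) * (f x - finf) + 7 * a / 8 * E"
  proof -
    define T where "T = a * (2 * c * (f x - finf))"
    define Ae where "Ae = a * E"
    define AG where "AG = a * (norm (G x))^2"
    have Ae0: "Ae \<ge> 0" using a by (simp add: Ae_def E_def)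
    have i1: "AG \<le> 9 / 2 * X + 2 * Ae" using f5 by (simp add: AG_def Ae_def)
    have i2: "T \<le> AG" using f6 by (simp add: T_def AG_def)
    have e1: "(1 - c * a / 6) * (f x - finf) = (f x - finf) - T / 12" unfolding T_def by (simp add: field_simps)
    have e2: "7 * a / 8 * E = 7 / 8 * Ae" "a * E / 2 = Ae / 2" by (simp_all add: Ae_def)
    show ?thesis unfolding e1 e2 using i1 i2 Ae0 by linarith
  qed
  finally show ?thesis by (simp add: C_def w_def e_def E_def)
qed


lemma real_final:
  fixes c a M\<sigma> \<mu> \<nu> :: real
  assumes c: "c > 0" and a: "a > 0" and ca: "c * a < 8" and M: "M\<sigma> \<ge> 0"
    and mu: "\<mu> \<ge> 15 * M\<sigma> / c" and nu: "\<nu> \<ge> 1 - c * a / 16"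
  shows "max 0 (1 - c * a / 6) * \<mu> + 7 * a / 8 * M\<sigma> \<le> \<mu> * \<nu>"
proof -
  have mu': "c * \<mu> \<ge> 15 * M\<sigma>" using mu c by (simp add: field_simps)
  have mu0: "\<mu> \<ge> 0" using mu' c M by (smt (verit) mult_nonneg_nonneg zero_le_mult_iff)
  have n1: "\<mu> * \<nu> \<ge> \<mu> * (1 - c * a / 16)" using nu mu0 by (simp add: mult_left_mono)
  show ?thesis
  proof (cases "1 - c * a / 6 \<ge> 0")
    case True
    hence "max 0 (1 - c * a / 6) = 1 - c * a / 6" by simp
    moreover have "7 * a / 8 * M\<sigma> \<le> \<mu> * (c * a) * (5 / 48)"
    proof -
      have "a * (15 * M\<sigma>) \<le> a * (c * \<mu>)" using mu' a by (simp add: mult_left_mono)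
      thus ?thesis using a M by (simp add: algebra_simps)
    qed
    ultimately show ?thesis using n1 by (simp add: algebra_simps)
  next
    case False
    hence z: "max 0 (1 - c * a / 6) * \<mu> = 0" by simp
    have f1: "7 * a / 8 * M\<sigma> \<le> \<mu> / 2"
    proof -
      have "a * (15 * M\<sigma>) \<le> a * (c * \<mu>)" using mu' a by (simp add: mult_left_mono)
      also have "\<dots> \<le> 8 * \<mu>"
      proof -
        have "(c * a) * \<mu> \<le> 8 * \<mu>" by (rule mult_right_mono) (use ca mu0 in auto)
        thus ?thesis by (simp add: algebra_simps)
      qed
      finally have i: "a * (15 * M\<sigma>) \<le> 8 * \<mu>" .
      have "0 \<le> a * M\<sigma>" using M a by simp
      moreover have "7 * a / 8 * M\<sigma> = 7/8 * (a * M\<sigma>)" "a * (15 * M\<sigma>) = 15 * (a * M\<sigma>)" by simp_all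
      ultimately show ?thesis using i by linarith
    qed
    have f2: "\<mu> * (1 - c * a / 16) \<ge> \<mu> / 2"
    proof -
      have "\<mu> * (c * a) \<le> \<mu> * 8" by (rule mult_left_mono) (use ca mu0 in auto)
      moreover have "\<mu> * (1 - c * a / 16) = \<mu> - \<mu> * (c * a) / 16" by (simp add: algebra_simps)
      ultimately show ?thesis by linarith
    qed
    show ?thesis using z f1 f2 n1 by linarith
  qed
qed

theorem theorem2:
  fixes M :: "'a measure"
    and F :: "nat \<Rightarrow> 'a measure"
    and N :: nat
    and \<psi> :: "nat \<Rightarrow> real^'n \<Rightarrow> real"
    and g\<psi> :: "nat \<Rightarrow> real^'n \<Rightarrow> real^'n"
    and \<Psi> :: "real^'n \<Rightarrow> real"
    and grad\<Psi> :: "real^'n \<Rightarrow> real^'n"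
    and \<theta> :: "nat \<Rightarrow> 'a \<Rightarrow> real^'n"
    and \<theta>1 :: "real^'n"
    and S :: "nat \<Rightarrow> 'a \<Rightarrow> nat set"
    and g :: "nat \<Rightarrow> 'a \<Rightarrow> real^'n"
    and B :: "nat \<Rightarrow> 'a \<Rightarrow> real^'n^'n"
    and \<sigma> :: "nat \<Rightarrow> real"
    and r1 r2 \<alpha> \<Psi>inf L h c M\<sigma> \<zeta> :: real
  assumes prob: "prob_space M"
    and filt: "filtration (space M) F"
    and subalg: "\<And>k. subalgebra M (F k)"
    and N_pos: "N \<ge> 1"
    and \<psi>_diff: "\<And>i x. i \<in> {1..N} \<Longrightarrow> (\<psi> i has_derivative (\<lambda>v. g\<psi> i x \<bullet> v)) (at x)"
    and \<Psi>_def: "\<And>x. \<Psi> x = (1 / real N) * (\<Sum>i = 1..N. \<psi> i x)"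
    and grad\<Psi>_def: "\<And>x. grad\<Psi> x = (1 / real N) *\<^sub>R (\<Sum>i = 1..N. g\<psi> i x)"
    \<comment> \<open>(i)\<close>
    and \<Psi>_C1: "continuous_on UNIV grad\<Psi>"
    and \<Psi>_lb: "\<And>x. \<Psi>inf \<le> \<Psi> x"
    and L_ge: "L \<ge> 1"
    and \<Psi>_lip: "\<And>x y. norm (grad\<Psi> x - grad\<Psi> y) \<le> L * norm (x - y)"
    \<comment> \<open>method\<close>
    and r: "0 < r1" "r1 < r2"
    and \<alpha>_pos: "0 < \<alpha>"
    and \<theta>_init: "\<And>\<omega>. \<theta> 1 \<omega> = \<theta>1"
    and S_sub: "\<And>k \<omega>. k \<ge> 1 \<Longrightarrow> \<omega> \<in> space M \<Longrightarrow> S k \<omega> \<subseteq> {1..N} \<and> S k \<omega> \<noteq> {}"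
    and g_def: "\<And>k \<omega>. k \<ge> 1 \<Longrightarrow> \<omega> \<in> space M \<Longrightarrow>
        g k \<omega> = (1 / real (card (S k \<omega>))) *\<^sub>R (\<Sum>i \<in> S k \<omega>. g\<psi> i (\<theta> k \<omega>))"
    and g_meas: "\<And>k. g k \<in> borel_measurable M"
    and B_meas: "\<And>k. B k \<in> borel_measurable M"
    and B_sym: "\<And>k \<omega>. k \<ge> 1 \<Longrightarrow> \<omega> \<in> space M \<Longrightarrow> transpose (B k \<omega>) = B k \<omega>"
    and \<theta>_step: "\<And>k \<omega>. k \<ge> 1 \<Longrightarrow> \<omega> \<in> space M \<Longrightarrow>
        \<theta> (Suc k) \<omega> = \<theta> k \<omega> + 1 *\<^sub>R
          (- (matrix_inv (B k \<omega> + s2qn_lambda r1 r2 \<alpha> (norm (g (k - 1) \<omega>)) *\<^sub>R mat 1) *v g k \<omega>))"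
    \<comment> \<open>filtration / measurability\<close>
    and \<theta>_adapted: "\<And>k. k \<ge> 1 \<Longrightarrow> \<theta> k \<in> borel_measurable (F (k - 1))"
    and g_adapted: "\<And>k. g k \<in> borel_measurable (F k)"
    \<comment> \<open>(ii)\<close>
    and cindep: "\<And>k. k \<ge> 1 \<Longrightarrow> cond_indep M (F (k - 1)) (B k) (g k)"
    and g_int: "\<And>k j. k \<ge> 1 \<Longrightarrow> integrable M (\<lambda>\<omega>. g k \<omega> $ j)"
    and unbiased: "\<And>k j. k \<ge> 1 \<Longrightarrow>
        AE \<omega> in M. real_cond_exp M (F (k - 1)) (\<lambda>\<omega>. g k \<omega> $ j) \<omega> = grad\<Psi> (\<theta> k \<omega>) $ j"
    \<comment> \<open>(iii)\<close>
    and var_bd: "\<And>k. k \<ge> 1 \<Longrightarrow>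
        AE \<omega> in M. nn_cond_exp M (F (k - 1))
            (\<lambda>\<omega>. ennreal ((norm (g k \<omega> - grad\<Psi> (\<theta> k \<omega>)))\<^sup>2)) \<omega> \<le> ennreal ((\<sigma> k)\<^sup>2)"
    \<comment> \<open>(iv)\<close>
    and h_pos: "h > 0"
    and B_bd: "\<And>k \<omega>. k \<ge> 1 \<Longrightarrow> \<omega> \<in> space M \<Longrightarrow> psd_between h (B k \<omega>)"
    \<comment> \<open>(v) PL\<close>
    and c_pos: "0 < c"
    and PL: "\<And>x. 2 * c * (\<Psi> x - \<Psi>inf) \<le> (norm (grad\<Psi> x))\<^sup>2"
    \<comment> \<open>parameters\<close>
    and \<alpha>_small: "\<alpha> < min (r1 / (4 * r2 * (L + h))) (8 / c)"
    and \<zeta>: "0 < \<zeta>" "\<zeta> < 1"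
    and \<sigma>_bd: "\<And>k. (\<sigma> k)\<^sup>2 \<le> M\<sigma> * \<zeta> ^ k"
  shows "\<forall>k \<ge> 1. (\<integral>\<^sup>+ \<omega>. ennreal (\<Psi> (\<theta> k \<omega>) - \<Psi>inf) \<partial>M)
           \<le> ennreal (max (\<Psi> \<theta>1 - \<Psi>inf) (15 * M\<sigma> / c)
                      * (max \<zeta> (1 - c * \<alpha> / 16)) ^ (k - 1))"
proof -
  interpret P: prob_space M by (rule prob)
  have M0: "M\<sigma> \<ge> 0"
  proof -
    have "0 \<le> (\<sigma> 0)\<^sup>2" by simp
    also have "\<dots> \<le> M\<sigma>" using \<sigma>_bd[of 0] by simp
    finally show ?thesis .
  qed
  have Lnn: "L \<ge> 0" using L_ge by simp
  have \<Psi>fun: "\<Psi> = (\<lambda>x. (1 / real N) * (\<Sum>i = 1..N. \<psi> i x))" using \<Psi>_def by (rule ext)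
  have \<Psi>der: "(\<Psi> has_derivative (\<lambda>v. grad\<Psi> x \<bullet> v)) (at x)" for x
  proof -
    have "((\<lambda>x. \<Sum>i = 1..N. \<psi> i x) has_derivative (\<lambda>v. \<Sum>i = 1..N. g\<psi> i x \<bullet> v)) (at x)"
      by (rule has_derivative_sum) (use \<psi>_diff in auto)
    hence "((\<lambda>x. (1 / real N) * (\<Sum>i = 1..N. \<psi> i x)) has_derivative (\<lambda>v. (1 / real N) * (\<Sum>i = 1..N. g\<psi> i x \<bullet> v))) (at x)"
      by (rule has_derivative_mult_right)
    moreover have "(\<lambda>v. (1 / real N) * (\<Sum>i = 1..N. g\<psi> i x \<bullet> v)) = (\<lambda>v. grad\<Psi> x \<bullet> v)"
      by (rule ext) (simp add: grad\<Psi>_def inner_sum_left)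
    ultimately show ?thesis unfolding \<Psi>fun by simp
  qed
  have rpos: "r2 > 0" using r by simp
  have Lh: "L + h > 0" using Lnn h_pos by simp
  have D1: "\<alpha> < r1 / (4 * r2 * (L + h))" using \<alpha>_small by simp
  have D: "0 < 4 * r2 * (L + h)" using rpos Lh by simp
  have D2: "\<alpha> * (4 * r2 * (L + h)) < r1" by (rule iffD1[OF pos_less_divide_eq[OF D] D1])
  have "(4 * r2) * (\<alpha> * (L + h)) < (4 * r2) * (1/4)" using D2 r by (simp add: algebra_simps)
  hence aLh: "\<alpha> * (L + h) < 1/4" by (rule mult_left_less_imp_less) (use rpos in simp)
  have aL: "\<alpha> * L \<le> 1/4" and ah: "\<alpha> * h \<le> 1/4"
    using aLh \<alpha>_pos Lnn h_pos by (simp_all add: algebra_simps) (smt (verit) mult_nonneg_nonneg)+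
  have ca: "c * \<alpha> < 8" using \<alpha>_small c_pos by (simp add: field_simps)
  define \<rho> where "\<rho> = max 0 (1 - c * \<alpha> / 6)"
  define K where "K = 7 * \<alpha> / 8"
  have \<rho>0: "\<rho> \<ge> 0" and K0: "K \<ge> 0" using \<alpha>_pos by (simp_all add: \<rho>_def K_def)
  have \<theta>meas: "\<theta> k \<in> borel_measurable M" if "k \<ge> 1" for k
    by (rule measurable_from_subalg[OF subalg \<theta>_adapted[OF that]])
  have cont\<Psi>: "continuous_on UNIV \<Psi>"
    by (rule has_derivative_continuous_on) (use \<Psi>der has_derivative_at_withinI in blast)
  have \<Psi>\<theta>meas: "(\<lambda>\<omega>. \<Psi> (\<theta> k \<omega>)) \<in> borel_measurable M" if "k \<ge> 1" for k
    by (rule measurable_compose[OF \<theta>meas[OF that] borel_measurable_continuous_onI[OF cont\<Psi>]])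
  have gr\<theta>meas: "(\<lambda>\<omega>. grad\<Psi> (\<theta> k \<omega>)) \<in> borel_measurable M" if "k \<ge> 1" for k
    by (rule measurable_compose[OF \<theta>meas[OF that] borel_measurable_continuous_onI[OF \<Psi>_C1]])
  have emeas: "(\<lambda>\<omega>. (norm (g k \<omega> - grad\<Psi> (\<theta> k \<omega>)))\<^sup>2) \<in> borel_measurable M" if "k \<ge> 1" for k
    using g_meas[of k] gr\<theta>meas[OF that] by measurable
  have point: "\<Psi> (\<theta> (Suc k) \<omega>) - \<Psi>inf \<le> \<rho> * (\<Psi> (\<theta> k \<omega>) - \<Psi>inf) + K * (norm (g k \<omega> - grad\<Psi> (\<theta> k \<omega>)))\<^sup>2"
    if k: "k \<ge> 1" and \<omega>: "\<omega> \<in> space M" for k \<omega>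
  proof -
    have lb: "1 / \<alpha> \<le> s2qn_lambda r1 r2 \<alpha> (norm (g (k - 1) \<omega>))"
      "s2qn_lambda r1 r2 \<alpha> (norm (g (k - 1) \<omega>)) \<le> 2 / \<alpha>"
      using lam_bounds[OF r \<alpha>_pos norm_ge_zero] by auto
    have "\<Psi> (\<theta> (Suc k) \<omega>) - \<Psi>inf \<le> (1 - c * \<alpha> / 6) * (\<Psi> (\<theta> k \<omega>) - \<Psi>inf) + K * (norm (g k \<omega> - grad\<Psi> (\<theta> k \<omega>)))\<^sup>2"
      unfolding \<theta>_step[OF k \<omega>] K_def
      by (rule step_ineq[OF \<Psi>der \<Psi>_lip Lnn \<alpha>_pos h_pos c_pos aL ah B_sym[OF k \<omega>] B_bd[OF k \<omega>] lb PL])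
    moreover have "(1 - c * \<alpha> / 6) * (\<Psi> (\<theta> k \<omega>) - \<Psi>inf) \<le> \<rho> * (\<Psi> (\<theta> k \<omega>) - \<Psi>inf)"
      using \<Psi>_lb[of "\<theta> k \<omega>"] unfolding \<rho>_def by (simp add: mult_right_mono)
    ultimately show ?thesis by linarith
  qed
  define E where "E k = (\<integral>\<^sup>+ \<omega>. ennreal (\<Psi> (\<theta> k \<omega>) - \<Psi>inf) \<partial>M)" for k
  have noise: "(\<integral>\<^sup>+ \<omega>. ennreal ((norm (g k \<omega> - grad\<Psi> (\<theta> k \<omega>)))\<^sup>2) \<partial>M) \<le> ennreal ((\<sigma> k)\<^sup>2)"
    if k: "k \<ge> 1" for k
  proof -
    have "finite_measure_subalgebra M (F (k - 1))"
      by (simp add: finite_measure_subalgebra_def finite_measure_subalgebra_axioms_def subalg P.finite_measure_axioms)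
    then interpret S: sigma_finite_subalgebra M "F (k - 1)" by (rule finite_measure_subalgebra_is_sigma_finite)
    have "(\<integral>\<^sup>+ \<omega>. ennreal ((norm (g k \<omega> - grad\<Psi> (\<theta> k \<omega>)))\<^sup>2) \<partial>M)
        = (\<integral>\<^sup>+ \<omega>. nn_cond_exp M (F (k - 1)) (\<lambda>\<omega>. ennreal ((norm (g k \<omega> - grad\<Psi> (\<theta> k \<omega>)))\<^sup>2)) \<omega> \<partial>M)"
      using S.nn_cond_exp_intg[of "\<lambda>_. 1" "\<lambda>\<omega>. ennreal ((norm (g k \<omega> - grad\<Psi> (\<theta> k \<omega>)))\<^sup>2)"] emeas[OF k]
      by simp
    also have "\<dots> \<le> (\<integral>\<^sup>+ \<omega>. ennreal ((\<sigma> k)\<^sup>2) \<partial>M)"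
      by (rule nn_integral_mono_AE[OF var_bd[OF k]])
    also have "\<dots> = ennreal ((\<sigma> k)\<^sup>2)" by (simp add: P.emeasure_space_1)
    finally show ?thesis .
  qed
  have recur: "E (Suc k) \<le> ennreal \<rho> * E k + ennreal K * ennreal ((\<sigma> k)\<^sup>2)" if k: "k \<ge> 1" for k
  proof -
    have "E (Suc k) \<le> (\<integral>\<^sup>+ \<omega>. ennreal \<rho> * ennreal (\<Psi> (\<theta> k \<omega>) - \<Psi>inf)
                         + ennreal K * ennreal ((norm (g k \<omega> - grad\<Psi> (\<theta> k \<omega>)))\<^sup>2) \<partial>M)"
      unfolding E_def
    proof (rule nn_integral_mono)
      fix \<omega> assume \<omega>: "\<omega> \<in> space M"
      have "ennreal (\<Psi> (\<theta> (Suc k) \<omega>) - \<Psi>inf) \<le> ennreal (\<rho> * (\<Psi> (\<theta> k \<omega>) - \<Psi>inf) + K * (norm (g k \<omega> - grad\<Psi> (\<theta> k \<omega>)))\<^sup>2)"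
        by (rule ennreal_leI[OF point[OF k \<omega>]])
      also have "\<dots> = ennreal \<rho> * ennreal (\<Psi> (\<theta> k \<omega>) - \<Psi>inf) + ennreal K * ennreal ((norm (g k \<omega> - grad\<Psi> (\<theta> k \<omega>)))\<^sup>2)"
        using \<rho>0 K0 \<Psi>_lb[of "\<theta> k \<omega>"] by (simp add: ennreal_plus ennreal_mult)
      finally show "ennreal (\<Psi> (\<theta> (Suc k) \<omega>) - \<Psi>inf) \<le> ennreal \<rho> * ennreal (\<Psi> (\<theta> k \<omega>) - \<Psi>inf) + ennreal K * ennreal ((norm (g k \<omega> - grad\<Psi> (\<theta> k \<omega>)))\<^sup>2)" .
    qed
    also have "\<dots> = ennreal \<rho> * E k + ennreal K * (\<integral>\<^sup>+ \<omega>. ennreal ((norm (g k \<omega> - grad\<Psi> (\<theta> k \<omega>)))\<^sup>2) \<partial>M)"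
      unfolding E_def using \<Psi>\<theta>meas[OF k] emeas[OF k]
      by (subst nn_integral_add) (auto simp: nn_integral_cmult)
    also have "\<dots> \<le> ennreal \<rho> * E k + ennreal K * ennreal ((\<sigma> k)\<^sup>2)"
      using noise[OF k] by (simp add: add_left_mono mult_left_mono)
    finally show ?thesis .
  qed
  define \<mu> where "\<mu> = max (\<Psi> \<theta>1 - \<Psi>inf) (15 * M\<sigma> / c)"
  define \<nu> where "\<nu> = max \<zeta> (1 - c * \<alpha> / 16)"
  have \<nu>0: "\<nu> \<ge> 0" and \<zeta>\<nu>: "\<zeta> \<le> \<nu>" using \<zeta> by (simp_all add: \<nu>_def)
  have \<mu>0: "\<mu> \<ge> 0" using \<Psi>_lb[of \<theta>1] by (simp add: \<mu>_def)
  have fin: "\<rho> * \<mu> + K * M\<sigma> \<le> \<mu> * \<nu>"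
    unfolding \<rho>_def K_def by (rule real_final[OF c_pos \<alpha>_pos ca M0]) (simp_all add: \<mu>_def \<nu>_def)
  have main: "E (Suc n) \<le> ennreal (\<mu> * \<nu> ^ n)" for n
  proof (induction n)
    case 0
    have "E (Suc 0) = ennreal (\<Psi> \<theta>1 - \<Psi>inf)"
      unfolding E_def using \<theta>_init by (simp add: P.emeasure_space_1)
    also have "\<dots> \<le> ennreal \<mu>" by (rule ennreal_leI) (simp add: \<mu>_def)
    finally show ?case by simp
  next
    case (Suc n)
    have "E (Suc (Suc n)) \<le> ennreal \<rho> * E (Suc n) + ennreal K * ennreal ((\<sigma> (Suc n))\<^sup>2)"
      by (rule recur) simp
    also have "\<dots> \<le> ennreal \<rho> * ennreal (\<mu> * \<nu> ^ n) + ennreal K * ennreal (M\<sigma> * \<zeta> ^ Suc n)"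
      using Suc.IH \<sigma>_bd[of "Suc n"]
      by (intro add_mono mult_left_mono ennreal_leI) auto
    also have "\<dots> = ennreal (\<rho> * (\<mu> * \<nu> ^ n) + K * (M\<sigma> * \<zeta> ^ Suc n))"
      using \<rho>0 K0 \<mu>0 \<nu>0 M0 \<zeta> by (simp add: ennreal_plus ennreal_mult)
    also have "\<dots> \<le> ennreal (\<mu> * \<nu> ^ Suc n)"
    proof (rule ennreal_leI)
      have "\<zeta> ^ Suc n \<le> \<nu> ^ n"
      proof -
        have "\<zeta> ^ Suc n \<le> \<zeta> ^ n" using \<zeta> by (simp add: power_decreasing)
        also have "\<dots> \<le> \<nu> ^ n" using \<zeta> \<zeta>\<nu> by (simp add: power_mono)
        finally show ?thesis .
      qed
      hence "K * (M\<sigma> * \<zeta> ^ Suc n) \<le> K * (M\<sigma> * \<nu> ^ n)" using K0 M0 by (simp add: mult_left_mono)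
      moreover have "\<nu> ^ n * (\<rho> * \<mu> + K * M\<sigma>) \<le> \<nu> ^ n * (\<mu> * \<nu>)" using fin \<nu>0 by (simp add: mult_left_mono)
      ultimately show "\<rho> * (\<mu> * \<nu> ^ n) + K * (M\<sigma> * \<zeta> ^ Suc n) \<le> \<mu> * \<nu> ^ Suc n"
        by (simp add: algebra_simps)
    qed
    finally show ?case .
  qed
  show ?thesis
  proof (intro allI impI)
    fix k :: nat assume "k \<ge> 1"
    then obtain n where n: "k = Suc n" by (cases k) auto
    show "(\<integral>\<^sup>+ \<omega>. ennreal (\<Psi> (\<theta> k \<omega>) - \<Psi>inf) \<partial>M)
           \<le> ennreal (max (\<Psi> \<theta>1 - \<Psi>inf) (15 * M\<sigma> / c) * (max \<zeta> (1 - c * \<alpha> / 16)) ^ (k - 1))"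
      using main[of n] unfolding n E_def \<mu>_def \<nu>_def by simp
  qed
qed

end
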